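(* Under the hypotheses (i)–(iv) below, for $0<\delta<1$ let $$(x^*(\delta),z^*(\delta))=\operatorname*{argmax}_{x}\operatorname*{argmin}_{\|z\|_\infty\le\ell_F}\Big\{V(\theta;z)+\delta\nabla_\theta V(\theta;z)^\top x-F^*(z)-\tfrac{\delta}{2}\|x\|^2\Big\}.$$ Then $\|x^*(\delta)-\nabla_\theta R(\pi_\theta)\|^2=\mathcal O(\delta^2)$ as $\delta\to0_+$. Hypotheses: (i) $F:\mathbb{R}^{SA}\to\mathbb{R}$ is concave and differentiable everywhere with $\max\{\|\nabla F(\lambda)\|_\infty:\|\lambda\|_1\le\frac{2}{1-\gamma}\}\le\ell_F$; (ii) $\|\nabla F(\lambda)-\nabla F(\lambda')\|_\infty\le L_F\|\lambda-\lambda'\|_1$ for all $\lambda,\lambda'$; (iii) $F^*$ is $\ell_{F^*}$-Lipschitz w.r.t. $\|\cdot\|_\infty$ on $\{z:\|z\|_\infty\le2\ell_F,F^*(z)>-\infty\}$; (iv) $\pi_\theta$ is differentiable in $\theta$ with $\|\nabla_\theta\pi_\theta(\cdot|s)\|_{\infty,2}\le C$ for all $s$.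
   Context: Finite MDP with states $\mathcal S$ ($S=|\mathcal S|$), actions $\mathcal A$ ($A=|\mathcal A|$), initial distribution $\xi$, discount $\gamma\in(0,1)$. Policies $\pi_\theta$, $\theta\in\Theta\subset\mathbb{R}^d$; occupancy measure $\lambda(\theta)_{sa}=\sum_{t\ge0}\gamma^t\mathbb P(s_t=s,a_t=a\mid\pi_\theta,s_0\sim\xi)$; $R(\pi_\theta)=F(\lambda(\theta))$; $V(\theta;z)=\langle z,\lambda(\theta)\rangle$ for $z\in\mathbb{R}^{SA}$; Fenchel dual $F^*(z)=\inf_\lambda\{\langle\lambda,z\rangle-F(\lambda)\}$. $\nabla_\theta\pi_\theta(\cdot|s)=[\nabla_\theta\pi_\theta(1|s),\dots,\nabla_\theta\pi_\theta(A|s)]\in\mathbb{R}^{d\times A}$ and $\|B\|_{\infty,2}:=\max_{\|u\|_\infty\le1}\|Bu\|_2$. *)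

theory Defs
  imports "HOL-Analysis.Analysis" "HOL-Library.Landau_Symbols"
begin

definition grad :: "('v::real_inner \<Rightarrow> real) \<Rightarrow> 'v \<Rightarrow> 'v" where
  "grad f x = (THE D. GDERIV f x :> D)"

definition norm1 :: "real ^ 'n \<Rightarrow> real" where
  "norm1 v = (\<Sum>i\<in>UNIV. \<bar>v $ i\<bar>)"

text \<open>State distribution at time t of the Markov chain induced by a stationary policy
  pol (pol s a = probability of action a in state s), transition kernel P
  (P s a s' = probability of moving to s' from s under a) and initial distribution xi:
  state_dist xi P pol t s = Prob(s_t = s).\<close>
fun state_dist :: "('s::finite \<Rightarrow> real) \<Rightarrow> ('s \<Rightarrow> 'a::finite \<Rightarrow> 's \<Rightarrow> real)
    \<Rightarrow> ('s \<Rightarrow> 'a \<Rightarrow> real) \<Rightarrow> nat \<Rightarrow> 's \<Rightarrow> real" where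
  "state_dist xi P pol 0 s = xi s"
| "state_dist xi P pol (Suc t) s' =
     (\<Sum>s\<in>UNIV. \<Sum>a\<in>UNIV. state_dist xi P pol t s * pol s a * P s a s')"

definition occ :: "('s::finite \<Rightarrow> real) \<Rightarrow> ('s \<Rightarrow> 'a::finite \<Rightarrow> 's \<Rightarrow> real) \<Rightarrow> real
    \<Rightarrow> ('s \<Rightarrow> 'a \<Rightarrow> real) \<Rightarrow> real ^ ('s \<times> 'a)" where
  "occ xi P \<gamma> pol = (\<chi> p. (\<Sum>t. \<gamma> ^ t * state_dist xi P pol t (fst p) * pol (fst p) (snd p)))"

definition fenchel_dual :: "(real ^ 'n \<Rightarrow> real) \<Rightarrow> real ^ 'n \<Rightarrow> ereal" where
  "fenchel_dual F z = (INF l. ereal (inner l z - F l))"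

end

theory Submission
  imports Defs
begin


lemma grad_eqI:
  fixes f :: "'v::real_inner \<Rightarrow> real"
  assumes "GDERIV f x :> D" shows "grad f x = D"
  unfolding grad_def
proof (rule the_equality)
  show "GDERIV f x :> D" by (rule assms)
next
  fix D' assume "GDERIV f x :> D'"
  then have "(\<lambda>h. inner h D') = (\<lambda>h. inner h D)"
    using assms unfolding gderiv_def by (metis has_derivative_unique)
  then have "inner (D' - D) D' = inner (D' - D) D" by meson
  then have "inner (D' - D) (D' - D) = 0" by (simp add: inner_diff_right)
  then show "D' = D" by simp
qed

lemma differentiable_gderiv:
  fixes f :: "'v::euclidean_space \<Rightarrow> real"
  assumes "f differentiable (at x)" shows "GDERIV f x :> grad f x"
proof -
  obtain f' where f': "(f has_derivative f') (at x)" using assms unfolding differentiable_def by blast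
  then have lin: "linear f'" using has_derivative_linear by blast
  have "\<And>h. f' h = inner h (adjoint f' 1)"
    using adjoint_works[OF lin] by (simp add: inner_real_def)
  then have "f' = (\<lambda>h. inner h (adjoint f' 1))" by auto
  then have "GDERIV f x :> adjoint f' 1" using f' unfolding gderiv_def by simp
  then show ?thesis using grad_eqI by metis
qed

lemma concave_grad_ineq:
  fixes F :: "'v::euclidean_space \<Rightarrow> real"
  assumes conc: "concave_on UNIV F" and d: "GDERIV F x :> D"
  shows "F y \<le> F x + inner (y - x) D"
proof -
  define v where "v = y - x"
  define phi where "phi t = - F (x + t *\<^sub>R v)" for t :: real
  have cphi: "convex_on UNIV phi"
  proof (rule convex_onI)
    fix t a b :: real assume t: "0 < t" "t < 1"
    have "x + ((1 - t) *\<^sub>R a + t *\<^sub>R b) *\<^sub>R v = (1 - t) *\<^sub>R (x + a *\<^sub>R v) + t *\<^sub>R (x + b *\<^sub>R v)"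
      by (simp add: algebra_simps)
    moreover have "F ((1 - t) *\<^sub>R (x + a *\<^sub>R v) + t *\<^sub>R (x + b *\<^sub>R v)) \<ge> (1 - t) * F (x + a *\<^sub>R v) + t * F (x + b *\<^sub>R v)"
      using concave_onD[OF conc, of t] t by auto
    ultimately show "phi ((1 - t) *\<^sub>R a + t *\<^sub>R b) \<le> (1 - t) * phi a + t * phi b"
      unfolding phi_def by simp
  qed auto
  have "((\<lambda>t. x + t *\<^sub>R v) has_derivative (\<lambda>t. t *\<^sub>R v)) (at 0)"
    by (auto intro!: derivative_eq_intros)
  moreover have "(F has_derivative (\<lambda>h. inner h D)) (at (x + 0 *\<^sub>R v))"
    using d unfolding gderiv_def by simp
  ultimately have "((\<lambda>t. F (x + t *\<^sub>R v)) has_derivative (\<lambda>t. inner (t *\<^sub>R v) D)) (at 0)"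
    using has_derivative_compose[where f="\<lambda>t. x + t *\<^sub>R v" and g=F] by blast
  then have "((\<lambda>t. F (x + t *\<^sub>R v)) has_derivative (\<lambda>t. t * inner v D)) (at 0)"
    by (simp add: mult.commute)
  then have "(phi has_field_derivative (- inner v D)) (at 0)"
    unfolding phi_def has_field_derivative_def
    by (auto intro!: derivative_eq_intros simp: mult.commute)
  then have "phi 1 - phi 0 \<ge> (- inner v D) * (1 - 0)"
    using convex_on_imp_above_tangent[OF cphi, of 0 1 "- inner v D"] by simp
  then show ?thesis unfolding phi_def v_def by simp
qed



fun Gsd :: "('s::finite \<Rightarrow> real) \<Rightarrow> ('s \<Rightarrow> 'a::finite \<Rightarrow> 's \<Rightarrow> real)
    \<Rightarrow> ('s \<Rightarrow> 'a \<Rightarrow> real) \<Rightarrow> ('s \<Rightarrow> 'a \<Rightarrow> 'v::real_vector) \<Rightarrow> nat \<Rightarrow> 's \<Rightarrow> 'v" where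
  "Gsd xi P pol gp 0 s = 0"
| "Gsd xi P pol gp (Suc t) s' =
     (\<Sum>s\<in>UNIV. \<Sum>a\<in>UNIV. (pol s a * P s a s') *\<^sub>R Gsd xi P pol gp t s
        + (state_dist xi P pol t s * P s a s') *\<^sub>R gp s a)"

lemma sum_swap3:
  "(\<Sum>x\<in>A. \<Sum>y\<in>B. \<Sum>z\<in>C. f x y z) = (\<Sum>y\<in>B. \<Sum>z\<in>C. \<Sum>x\<in>A. f x y z)"
proof -
  have "(\<Sum>x\<in>A. \<Sum>y\<in>B. \<Sum>z\<in>C. f x y z) = (\<Sum>y\<in>B. \<Sum>x\<in>A. \<Sum>z\<in>C. f x y z)"
    by (rule sum.swap)
  also have "\<dots> = (\<Sum>y\<in>B. \<Sum>z\<in>C. \<Sum>x\<in>A. f x y z)"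
    by (rule sum.cong[OF refl], rule sum.swap)
  finally show ?thesis .
qed

lemma sd_nonneg:
  assumes "\<forall>s. xi s \<ge> 0" "\<forall>s a s'. P s a s' \<ge> 0" "\<forall>s a. pol s a \<ge> 0"
  shows "state_dist xi P pol t s \<ge> 0"
  using assms by (induction t arbitrary: s) (auto intro!: sum_nonneg)

lemma sd_sum:
  assumes "(\<Sum>s\<in>UNIV. xi s) = 1" "\<forall>s a. (\<Sum>s'\<in>UNIV. P s a s') = 1" "\<forall>s. (\<Sum>a\<in>UNIV. pol s a) = 1"
  shows "(\<Sum>s\<in>UNIV. state_dist xi P pol t s) = 1"
proof (induction t)
  case 0 then show ?case using assms by simp
next
  case (Suc t)
  have "(\<Sum>s'\<in>UNIV. state_dist xi P pol (Suc t) s')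
      = (\<Sum>s\<in>UNIV. \<Sum>a\<in>UNIV. \<Sum>s'\<in>UNIV. state_dist xi P pol t s * pol s a * P s a s')"
    unfolding state_dist.simps by (rule sum_swap3)
  also have "\<dots> = (\<Sum>s\<in>UNIV. \<Sum>a\<in>UNIV. state_dist xi P pol t s * pol s a)"
    using assms(2) by (simp add: sum_distrib_left[symmetric])
  also have "\<dots> = (\<Sum>s\<in>UNIV. state_dist xi P pol t s)"
    using assms(3) by (simp add: sum_distrib_left[symmetric])
  finally show ?case using Suc by simp
qed

lemma sd_deriv:
  fixes pi :: "'v::euclidean_space \<Rightarrow> 's::finite \<Rightarrow> 'a::finite \<Rightarrow> real"
  assumes "\<forall>s a. ((\<lambda>\<eta>. pi \<eta> s a) has_derivative (\<lambda>h. inner h (gp s a))) (at th)"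
  shows "((\<lambda>\<eta>. state_dist xi P (pi \<eta>) t s) has_derivative
            (\<lambda>h. inner h (Gsd xi P (pi th) gp t s))) (at th)"
proof (induction t arbitrary: s)
  case 0 then show ?case by (simp add: has_derivative_const)
next
  case (Suc t)
  have "((\<lambda>\<eta>. \<Sum>u\<in>UNIV. \<Sum>a\<in>UNIV. state_dist xi P (pi \<eta>) t u * pi \<eta> u a * P u a s) has_derivative
     (\<lambda>h. \<Sum>u\<in>UNIV. \<Sum>a\<in>UNIV. (state_dist xi P (pi th) t u * inner h (gp u a)
          + inner h (Gsd xi P (pi th) gp t u) * pi th u a) * P u a s)) (at th)"
  proof (intro has_derivative_sum)
    fix u a
    have "((\<lambda>\<eta>. state_dist xi P (pi \<eta>) t u * pi \<eta> u a) has_derivative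
       (\<lambda>h. state_dist xi P (pi th) t u * inner h (gp u a) + inner h (Gsd xi P (pi th) gp t u) * pi th u a)) (at th)"
      by (rule has_derivative_mult[OF Suc assms[rule_format]])
    then show "((\<lambda>\<eta>. state_dist xi P (pi \<eta>) t u * pi \<eta> u a * P u a s) has_derivative
       (\<lambda>h. (state_dist xi P (pi th) t u * inner h (gp u a) + inner h (Gsd xi P (pi th) gp t u) * pi th u a) * P u a s)) (at th)"
      by (rule has_derivative_mult_left)
  qed
  moreover have eq: "\<And>h. inner h (Gsd xi P (pi th) gp (Suc t) s) = (\<Sum>u\<in>UNIV. \<Sum>a\<in>UNIV. (state_dist xi P (pi th) t u * inner h (gp u a)
          + inner h (Gsd xi P (pi th) gp t u) * pi th u a) * P u a s)"
    by (simp add: inner_sum_right inner_add_right algebra_simps)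
  ultimately show ?case by (simp add: eq)
qed

lemma Gsd_bound:
  fixes gp :: "'s::finite \<Rightarrow> 'a::finite \<Rightarrow> 'v::real_normed_vector"
  assumes "\<forall>s. xi s \<ge> 0" "\<forall>s a s'. P s a s' \<ge> 0" "\<forall>s a. pol s a \<ge> 0"
    "(\<Sum>s\<in>UNIV. xi s) = 1" "\<forall>s a. (\<Sum>s'\<in>UNIV. P s a s') = 1" "\<forall>s. (\<Sum>a\<in>UNIV. pol s a) = 1"
    and K: "\<forall>s. (\<Sum>a\<in>UNIV. norm (gp s a)) \<le> K"
  shows "(\<Sum>s\<in>UNIV. norm (Gsd xi P pol gp t s)) \<le> real t * K"
proof (induction t)
  case 0 then show ?case by simp
next
  case (Suc t)
  let ?sd = "state_dist xi P pol t"
  let ?G = "Gsd xi P pol gp t"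
  have sdn: "\<And>s. ?sd s \<ge> 0" using sd_nonneg assms(1-3) by blast
  have "(\<Sum>s'\<in>UNIV. norm (Gsd xi P pol gp (Suc t) s'))
     \<le> (\<Sum>s'\<in>UNIV. \<Sum>s\<in>UNIV. \<Sum>a\<in>UNIV. (pol s a * P s a s') * norm (?G s) + (?sd s * P s a s') * norm (gp s a))"
  proof (rule sum_mono)
    fix s'
    have "norm (Gsd xi P pol gp (Suc t) s') \<le> (\<Sum>s\<in>UNIV. norm (\<Sum>a\<in>UNIV. (pol s a * P s a s') *\<^sub>R ?G s
        + (?sd s * P s a s') *\<^sub>R gp s a))" by (simp add: norm_sum)
    also have "\<dots> \<le> (\<Sum>s\<in>UNIV. \<Sum>a\<in>UNIV. norm ((pol s a * P s a s') *\<^sub>R ?G s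
        + (?sd s * P s a s') *\<^sub>R gp s a))" by (intro sum_mono norm_sum)
    also have "\<dots> \<le> (\<Sum>s\<in>UNIV. \<Sum>a\<in>UNIV. (pol s a * P s a s') * norm (?G s) + (?sd s * P s a s') * norm (gp s a))"
    proof (intro sum_mono)
      fix s a
      have "norm ((pol s a * P s a s') *\<^sub>R ?G s + (?sd s * P s a s') *\<^sub>R gp s a)
          \<le> norm ((pol s a * P s a s') *\<^sub>R ?G s) + norm ((?sd s * P s a s') *\<^sub>R gp s a)" by (rule norm_triangle_ineq)
      also have "\<dots> = (pol s a * P s a s') * norm (?G s) + (?sd s * P s a s') * norm (gp s a)"
        using assms(2,3) sdn by simp
      finally show "norm ((pol s a * P s a s') *\<^sub>R ?G s + (?sd s * P s a s') *\<^sub>R gp s a)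
          \<le> (pol s a * P s a s') * norm (?G s) + (?sd s * P s a s') * norm (gp s a)" .
    qed
    finally show "norm (Gsd xi P pol gp (Suc t) s') \<le> (\<Sum>s\<in>UNIV. \<Sum>a\<in>UNIV. (pol s a * P s a s') * norm (?G s) + (?sd s * P s a s') * norm (gp s a))" .
  qed
  also have "\<dots> = (\<Sum>s\<in>UNIV. \<Sum>a\<in>UNIV. \<Sum>s'\<in>UNIV. (pol s a * norm (?G s) + ?sd s * norm (gp s a)) * P s a s')"
    by (subst sum_swap3) (simp add: algebra_simps)
  also have "\<dots> = (\<Sum>s\<in>UNIV. \<Sum>a\<in>UNIV. pol s a * norm (?G s) + ?sd s * norm (gp s a))"
    using assms(5) by (simp add: sum_distrib_left[symmetric])
  also have "\<dots> = (\<Sum>s\<in>UNIV. norm (?G s) + ?sd s * (\<Sum>a\<in>UNIV. norm (gp s a)))"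
    using assms(6) by (simp add: sum.distrib sum_distrib_left[symmetric] sum_distrib_right[symmetric] mult.commute)
  also have "\<dots> \<le> (\<Sum>s\<in>UNIV. norm (?G s) + ?sd s * K)"
    using K sdn by (intro sum_mono add_left_mono mult_left_mono) auto
  also have "\<dots> = (\<Sum>s\<in>UNIV. norm (?G s)) + K"
    using sd_sum[OF assms(4-6), of t] by (simp add: sum.distrib sum_distrib_right[symmetric])
  also have "\<dots> \<le> real t * K + K" using Suc by simp
  finally show ?case by (simp add: algebra_simps)
qed



lemma summable_n_pow:
  fixes g :: real
  assumes "0 \<le> g" "g < 1" shows "summable (\<lambda>n. real n * g ^ n)"
proof -
  have "summable (\<lambda>n. diffs (\<lambda>n. 1::real) n * g ^ n)"
    by (rule termdiff_converges[where K=1]) (use assms in auto)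
  then have s: "summable (\<lambda>n. real (Suc n) * g ^ n)" by (simp add: diffs_def)
  show ?thesis
  proof (rule summable_comparison_test[OF _ s])
    show "\<exists>N. \<forall>n\<ge>N. norm (real n * g ^ n) \<le> real (Suc n) * g ^ n"
      using assms by (intro exI[of _ 0] allI impI) (simp add: mult_right_mono)
  qed
qed

lemma sd_le1:
  assumes "\<forall>s. xi s \<ge> 0" "\<forall>s a s'. P s a s' \<ge> 0" "\<forall>s a. pol s a \<ge> 0"
    "(\<Sum>s\<in>UNIV. xi s) = 1" "\<forall>s a. (\<Sum>s'\<in>UNIV. P s a s') = 1" "\<forall>s. (\<Sum>a\<in>UNIV. pol s a) = 1"
  shows "state_dist xi P pol t s \<le> 1"
proof -
  have "state_dist xi P pol t s \<le> (\<Sum>s\<in>UNIV. state_dist xi P pol t s)"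
    by (rule member_le_sum) (use sd_nonneg[OF assms(1-3)] in auto)
  then show ?thesis using sd_sum[OF assms(4-6)] by simp
qed

lemma dser_deriv:
  fixes pi :: "'v::euclidean_space \<Rightarrow> 's::finite \<Rightarrow> 'a::finite \<Rightarrow> real"
    and gp :: "'v \<Rightarrow> 's \<Rightarrow> 'a \<Rightarrow> 'v"
  assumes S: "convex S" "open S" "th \<in> S"
    and xi: "\<forall>s. xi s \<ge> 0" "(\<Sum>s\<in>UNIV. xi s) = 1"
    and P: "\<forall>s a s'. P s a s' \<ge> 0" "\<forall>s a. (\<Sum>s'\<in>UNIV. P s a s') = 1"
    and pn: "\<forall>\<eta>\<in>S. \<forall>s a. pi \<eta> s a \<ge> 0" "\<forall>\<eta>\<in>S. \<forall>s. (\<Sum>a\<in>UNIV. pi \<eta> s a) = 1"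
    and pd: "\<forall>\<eta>\<in>S. \<forall>s a. ((\<lambda>x. pi x s a) has_derivative (\<lambda>h. inner h (gp \<eta> s a))) (at \<eta>)"
    and K: "\<forall>\<eta>\<in>S. \<forall>s. (\<Sum>a\<in>UNIV. norm (gp \<eta> s a)) \<le> K"
    and g: "0 \<le> \<gamma>" "\<gamma> < 1"
  shows "((\<lambda>\<eta>. \<Sum>t. \<gamma>^t * state_dist xi P (pi \<eta>) t s) has_derivative
          (\<lambda>h. inner h (\<Sum>t. \<gamma>^t *\<^sub>R Gsd xi P (pi th) (gp th) t s))) (at th)"
proof -
  define f where "f n \<eta> = \<gamma>^n * state_dist xi P (pi \<eta>) n s" for n \<eta>
  define v where "v n \<eta> = \<gamma>^n *\<^sub>R Gsd xi P (pi \<eta>) (gp \<eta>) n s" for n \<eta>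
  define M where "M n = real n * \<gamma>^n * K" for n
  have vb: "norm (v n \<eta>) \<le> M n" if "\<eta> \<in> S" for n \<eta>
  proof -
    have "norm (Gsd xi P (pi \<eta>) (gp \<eta>) n s) \<le> (\<Sum>s\<in>UNIV. norm (Gsd xi P (pi \<eta>) (gp \<eta>) n s))"
      by (rule member_le_sum) auto
    also have "\<dots> \<le> real n * K"
      by (rule Gsd_bound) (use xi P pn K that in auto)
    finally have "\<gamma>^n * norm (Gsd xi P (pi \<eta>) (gp \<eta>) n s) \<le> \<gamma>^n * (real n * K)"
      by (intro mult_left_mono) (use g in auto)
    then show ?thesis unfolding v_def M_def using g by (simp add: algebra_simps)
  qed
  have sM: "summable M" unfolding M_def by (intro summable_mult2 summable_n_pow g)
  have sv: "summable (\<lambda>n. v n \<eta>)" if "\<eta> \<in> S" for \<eta>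
    by (rule summable_comparison_test[OF _ sM]) (use vb that in auto)
  have der: "(f n has_derivative (\<lambda>h. inner h (v n \<eta>))) (at \<eta> within S)" if "\<eta> \<in> S" for n \<eta>
  proof -
    have "((\<lambda>x. state_dist xi P (pi x) n s) has_derivative
            (\<lambda>h. inner h (Gsd xi P (pi \<eta>) (gp \<eta>) n s))) (at \<eta>)"
      by (rule sd_deriv) (use pd that in auto)
    then have "((\<lambda>x. \<gamma>^n * state_dist xi P (pi x) n s) has_derivative
            (\<lambda>h. \<gamma>^n * inner h (Gsd xi P (pi \<eta>) (gp \<eta>) n s))) (at \<eta>)"
      by (rule has_derivative_mult_right)
    moreover have "f n = (\<lambda>x. \<gamma>^n * state_dist xi P (pi x) n s)"
      unfolding f_def by (rule ext) (rule refl)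
    moreover have "(\<lambda>h. inner h (v n \<eta>)) = (\<lambda>h. \<gamma>^n * inner h (Gsd xi P (pi \<eta>) (gp \<eta>) n s))"
      unfolding v_def by (simp only: inner_scaleR_right)
    ultimately show ?thesis
      by (metis has_derivative_at_withinI)
  qed
  have unif: "\<forall>\<^sub>F n in sequentially. \<forall>x\<in>S. \<forall>h. norm ((\<Sum>i<n. inner h (v i x)) - inner h (\<Sum>i. v i x)) \<le> e * norm h"
    if e: "e > 0" for e
  proof -
    obtain N where N: "\<forall>n\<ge>N. norm (\<Sum>i. M (i + n)) < e" using suminf_exist_split[OF e sM] by blast
    show ?thesis unfolding eventually_sequentially
    proof (intro exI allI impI ballI)
      fix n x h assume n: "N \<le> n" and x: "x \<in> S"
      have "(\<Sum>i<n. inner h (v i x)) - inner h (\<Sum>i. v i x) = - inner h (\<Sum>i. v (i + n) x)"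
        using suminf_minus_initial_segment[OF sv[OF x], of n] by (simp add: inner_sum_right inner_diff_right)
      then have "norm ((\<Sum>i<n. inner h (v i x)) - inner h (\<Sum>i. v i x)) = \<bar>inner h (\<Sum>i. v (i + n) x)\<bar>" by simp
      also have "\<dots> \<le> norm h * norm (\<Sum>i. v (i + n) x)" by (rule Cauchy_Schwarz_ineq2)
      also have "\<dots> \<le> norm h * e"
      proof (rule mult_left_mono)
        have "norm (\<Sum>i. v (i + n) x) \<le> (\<Sum>i. M (i + n))"
          by (rule norm_suminf_le) (use vb x summable_ignore_initial_segment[OF sM] in auto)
        also have "(\<Sum>i. M (i + n)) \<le> e" using N n by auto
        finally show "norm (\<Sum>i. v (i + n) x) \<le> e" .
      qed simp
      finally show "norm ((\<Sum>i<n. inner h (v i x)) - inner h (\<Sum>i. v i x)) \<le> e * norm h"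
        by (simp add: mult.commute)
    qed
  qed
  have sf: "summable (\<lambda>n. f n \<eta>)" if "\<eta> \<in> S" for \<eta>
  proof (rule summable_comparison_test[OF _ summable_geometric[of \<gamma>]])
    show "\<exists>N. \<forall>n\<ge>N. norm (f n \<eta>) \<le> \<gamma> ^ n"
      using sd_nonneg[of xi P "pi \<eta>"] sd_le1[of xi P "pi \<eta>"] xi P pn that g unfolding f_def
      by (auto intro!: mult_left_le)
  qed (use g in auto)
  obtain G where G: "\<forall>x\<in>S. (\<lambda>n. f n x) sums (G x) \<and> (G has_derivative (\<lambda>h. inner h (\<Sum>i. v i x))) (at x within S)"
    using has_derivative_series[where g'="\<lambda>x h. inner h (\<Sum>i. v i x)", OF S(1) der unif S(3) summable_sums[OF sf[OF S(3)]]]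
    by blast
  have "(G has_derivative (\<lambda>h. inner h (\<Sum>i. v i th))) (at th)"
    using G S at_within_open[OF S(3,2)] by metis
  moreover have "\<And>x. x \<in> S \<Longrightarrow> G x = (\<Sum>t. \<gamma>^t * state_dist xi P (pi x) t s)"
    using G unfolding f_def by (metis sums_unique)
  ultimately show ?thesis unfolding v_def
    by (rule has_derivative_transform_within_open[OF _ S(2,3)])
qed



lemma delta_sum_scaleR:
  "(\<Sum>b\<in>(UNIV::'a::finite set). (if b = a then 1 else 0) *\<^sub>R (g b :: 'v::real_vector)) = g a"
proof -
  have "\<And>b. (if b = a then 1 else 0) *\<^sub>R g b = (if b = a then g a else 0)" by simp
  then show ?thesis by simp
qed

lemma sd_summable:
  assumes "\<forall>s. xi s \<ge> 0" "\<forall>s a s'. P s a s' \<ge> 0" "\<forall>s a. pol s a \<ge> 0"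
    "(\<Sum>s\<in>UNIV. xi s) = 1" "\<forall>s a. (\<Sum>s'\<in>UNIV. P s a s') = 1" "\<forall>s. (\<Sum>a\<in>UNIV. pol s a) = 1"
    and g: "0 \<le> \<gamma>" "\<gamma> < 1"
  shows "summable (\<lambda>t. \<gamma>^t * state_dist xi P pol t s)"
proof (rule summable_comparison_test[OF _ summable_geometric[of \<gamma>]])
  show "\<exists>N. \<forall>n\<ge>N. norm (\<gamma>^n * state_dist xi P pol n s) \<le> \<gamma> ^ n"
    using sd_nonneg[OF assms(1-3)] sd_le1[OF assms(1-6)] g
    by (auto intro!: mult_left_le)
qed (use g in auto)

lemma occ_eq:
  assumes "\<forall>s. xi s \<ge> 0" "\<forall>s a s'. P s a s' \<ge> 0" "\<forall>s a. pol s a \<ge> 0"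
    "(\<Sum>s\<in>UNIV. xi s) = 1" "\<forall>s a. (\<Sum>s'\<in>UNIV. P s a s') = 1" "\<forall>s. (\<Sum>a\<in>UNIV. pol s a) = 1"
    and g: "0 \<le> \<gamma>" "\<gamma> < 1"
  shows "occ xi P \<gamma> pol $ p = pol (fst p) (snd p) * (\<Sum>t. \<gamma>^t * state_dist xi P pol t (fst p))"
proof -
  have "occ xi P \<gamma> pol $ p = (\<Sum>t. \<gamma>^t * state_dist xi P pol t (fst p) * pol (fst p) (snd p))"
    unfolding occ_def by simp
  also have "\<dots> = (\<Sum>t. \<gamma>^t * state_dist xi P pol t (fst p)) * pol (fst p) (snd p)"
    by (rule suminf_mult2[symmetric]) (rule sd_summable[OF assms])
  finally show ?thesis by simp
qed

lemma occ_norm1: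
  assumes "\<forall>s. xi s \<ge> 0" "\<forall>s a s'. P s a s' \<ge> 0" "\<forall>s a. pol s a \<ge> 0"
    "(\<Sum>s\<in>UNIV. xi s) = 1" "\<forall>s a. (\<Sum>s'\<in>UNIV. P s a s') = 1" "\<forall>s. (\<Sum>a\<in>UNIV. pol s a) = 1"
    and g: "0 \<le> \<gamma>" "\<gamma> < 1"
  shows "norm1 (occ xi P \<gamma> pol) = 1 / (1 - \<gamma>)"
proof -
  let ?d = "\<lambda>s. (\<Sum>t. \<gamma>^t * state_dist xi P pol t s)"
  have dn: "?d s \<ge> 0" for s
    by (rule suminf_nonneg[OF sd_summable[OF assms]]) (use sd_nonneg[OF assms(1-3)] g in auto)
  have "norm1 (occ xi P \<gamma> pol) = (\<Sum>p\<in>UNIV. \<bar>pol (fst p) (snd p) * ?d (fst p)\<bar>)"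
    unfolding norm1_def using occ_eq[OF assms] by simp
  also have "\<dots> = (\<Sum>p\<in>UNIV. pol (fst p) (snd p) * ?d (fst p))"
    using dn assms(3) by (intro sum.cong refl) (simp add: abs_mult)
  also have "\<dots> = (\<Sum>s\<in>UNIV. \<Sum>a\<in>UNIV. pol s a * ?d s)"
    by (simp add: sum.cartesian_product UNIV_Times_UNIV[symmetric] case_prod_unfold del: UNIV_Times_UNIV)
  also have "\<dots> = (\<Sum>s\<in>UNIV. ?d s)"
    using assms(6) by (simp add: sum_distrib_right[symmetric])
  also have "\<dots> = (\<Sum>t. \<Sum>s\<in>UNIV. \<gamma>^t * state_dist xi P pol t s)"
    by (rule suminf_sum[symmetric]) (rule sd_summable[OF assms])
  also have "\<dots> = (\<Sum>t. \<gamma>^t)"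
    using sd_sum[OF assms(4-6)] by (simp add: sum_distrib_left[symmetric])
  also have "\<dots> = 1 / (1 - \<gamma>)" using suminf_geometric[of \<gamma>] g by simp
  finally show ?thesis .
qed

lemma norm1_add: "norm1 (a + b) \<le> norm1 a + norm1 b"
  unfolding norm1_def by (simp add: sum.distrib[symmetric] sum_mono abs_triangle_ineq)

lemma norm1_scale: "norm1 (c *\<^sub>R a) = \<bar>c\<bar> * norm1 a"
  unfolding norm1_def by (simp add: sum_distrib_left abs_mult)

lemma norm1_nonneg: "norm1 a \<ge> 0"
  unfolding norm1_def by (simp add: sum_nonneg)

lemma fd_le:
  "fenchel_dual F z \<le> ereal (inner l z - F l)"
  unfolding fenchel_dual_def by (rule INF_lower) simp

lemma fd_eq:
  fixes F :: "real ^ 'n \<Rightarrow> real"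
  assumes "concave_on UNIV F" "GDERIV F l :> D"
  shows "fenchel_dual F D = ereal (inner l D - F l)"
proof (rule antisym)
  show "fenchel_dual F D \<le> ereal (inner l D - F l)" by (rule fd_le)
  show "ereal (inner l D - F l) \<le> fenchel_dual F D"
    unfolding fenchel_dual_def
  proof (rule INF_greatest)
    fix l' :: "real ^ 'n"
    have "F l' \<le> F l + inner (l' - l) D" by (rule concave_grad_ineq[OF assms])
    then show "ereal (inner l D - F l) \<le> ereal (inner l' D - F l')"
      by (simp add: inner_diff_left)
  qed
qed



lemma occ_deriv:
  fixes xi :: "'s::finite \<Rightarrow> real"
    and P :: "'s \<Rightarrow> 'a::finite \<Rightarrow> 's \<Rightarrow> real"
    and \<pi> :: "real ^ 'd::finite \<Rightarrow> 's \<Rightarrow> 'a \<Rightarrow> real"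
  assumes xi_dist: "\<forall>s. xi s \<ge> 0" "(\<Sum>s\<in>UNIV. xi s) = 1"
    and P_dist: "\<forall>s a s'. P s a s' \<ge> 0" "\<forall>s a. (\<Sum>s'\<in>UNIV. P s a s') = 1"
    and gamma: "0 < \<gamma>" "\<gamma> < 1"
    and Theta: "open \<Theta>" "\<theta> \<in> \<Theta>"
    and pi_dist: "\<forall>th\<in>\<Theta>. \<forall>s a. \<pi> th s a \<ge> 0"
                 "\<forall>th\<in>\<Theta>. \<forall>s. (\<Sum>a\<in>UNIV. \<pi> th s a) = 1"
    and pi_diff: "\<forall>th\<in>\<Theta>. \<forall>s a. (\<lambda>\<eta>. \<pi> \<eta> s a) differentiable (at th)"
    and pi_grad_bound: "\<forall>th\<in>\<Theta>. \<forall>s. \<forall>u :: 'a \<Rightarrow> real. (\<forall>a. \<bar>u a\<bar> \<le> 1) \<longrightarrow>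
                          norm (\<Sum>a\<in>UNIV. u a *\<^sub>R grad (\<lambda>\<eta>. \<pi> \<eta> s a) th) \<le> C"
  shows "\<exists>D. ((\<lambda>\<eta>. occ xi P \<gamma> (\<pi> \<eta>)) has_derivative (\<lambda>h. \<chi> p. inner h (D p))) (at \<theta>)"
proof -
  obtain r where r: "r > 0" "ball \<theta> r \<subseteq> \<Theta>" using Theta open_contains_ball by blast
  define S where "S = ball \<theta> r"
  have S: "convex S" "open S" "\<theta> \<in> S" "S \<subseteq> \<Theta>" using r unfolding S_def by auto
  define gp where "gp \<eta> s a = grad (\<lambda>\<eta>. \<pi> \<eta> s a) \<eta>" for \<eta> s a
  have pd: "\<forall>\<eta>\<in>S. \<forall>s a. ((\<lambda>x. \<pi> x s a) has_derivative (\<lambda>h. inner h (gp \<eta> s a))) (at \<eta>)"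
    using pi_diff S(4) differentiable_gderiv unfolding gp_def gderiv_def by blast
  have gb: "norm (gp \<eta> s a) \<le> C" if "\<eta> \<in> S" for \<eta> s a
  proof -
    have "norm (\<Sum>b\<in>UNIV. (if b = a then 1 else 0) *\<^sub>R grad (\<lambda>\<eta>. \<pi> \<eta> s b) \<eta>) \<le> C"
      using pi_grad_bound that S(4) by auto
    then show ?thesis unfolding gp_def by (simp only: delta_sum_scaleR)
  qed
  have K: "\<forall>\<eta>\<in>S. \<forall>s. (\<Sum>a\<in>UNIV. norm (gp \<eta> s a)) \<le> real CARD('a) * C"
    using gb by (auto intro!: sum_bounded_above[where A=UNIV, simplified])
  define d where "d s \<eta> = (\<Sum>t. \<gamma>^t * state_dist xi P (\<pi> \<eta>) t s)" for s \<eta>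
  define Gd where "Gd s = (\<Sum>t. \<gamma>^t *\<^sub>R Gsd xi P (\<pi> \<theta>) (gp \<theta>) t s)" for s
  have dd: "(d s has_derivative (\<lambda>h. inner h (Gd s))) (at \<theta>)" for s
    unfolding d_def Gd_def
    by (rule dser_deriv[OF S(1-3) xi_dist P_dist _ _ pd K]) (use pi_dist S(4) gamma in auto)
  define D where "D p = \<pi> \<theta> (fst p) (snd p) *\<^sub>R Gd (fst p) + d (fst p) \<theta> *\<^sub>R gp \<theta> (fst p) (snd p)" for p
  have comp: "((\<lambda>\<eta>. occ xi P \<gamma> (\<pi> \<eta>) $ p) has_derivative (\<lambda>h. inner h (D p))) (at \<theta>)" for p
  proof -
    obtain s a where p: "p = (s, a)" by fastforce
    have "((\<lambda>\<eta>. \<pi> \<eta> s a * d s \<eta>) has_derivative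
        (\<lambda>h. \<pi> \<theta> s a * inner h (Gd s) + inner h (gp \<theta> s a) * d s \<theta>)) (at \<theta>)"
      by (rule has_derivative_mult[OF _ dd]) (use pd S in auto)
    then have "((\<lambda>\<eta>. \<pi> \<eta> s a * d s \<eta>) has_derivative (\<lambda>h. inner h (D p))) (at \<theta>)"
      by (rule has_derivative_eq_rhs) (simp add: D_def p inner_add_right algebra_simps)
    moreover have "\<And>\<eta>. \<eta> \<in> S \<Longrightarrow> \<pi> \<eta> s a * d s \<eta> = occ xi P \<gamma> (\<pi> \<eta>) $ p"
    proof -
      fix \<eta> assume "\<eta> \<in> S"
      then have e: "\<eta> \<in> \<Theta>" using S(4) by blast
      have "occ xi P \<gamma> (\<pi> \<eta>) $ (s, a) = \<pi> \<eta> s a * (\<Sum>t. \<gamma>^t * state_dist xi P (\<pi> \<eta>) t s)"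
        using occ_eq[OF xi_dist(1) P_dist(1) _ xi_dist(2) P_dist(2) _, of "\<pi> \<eta>" \<gamma> "(s, a)"] pi_dist e gamma
        by simp
      then show "\<pi> \<eta> s a * d s \<eta> = occ xi P \<gamma> (\<pi> \<eta>) $ p" unfolding d_def p by simp
    qed
    ultimately show ?thesis by (rule has_derivative_transform_within_open[OF _ S(2,3)])
  qed
  have "((\<lambda>\<eta>. occ xi P \<gamma> (\<pi> \<eta>)) has_derivative (\<lambda>h. \<chi> p. inner h (D p))) (at \<theta> within UNIV)"
  proof (rule has_derivative_componentwise_within[THEN iffD2], rule ballI)
    fix i :: "real ^ ('s \<times> 'a)" assume "i \<in> Basis"
    then obtain j where j: "i = axis j 1" using axis_inverse by blast
    show "((\<lambda>x. occ xi P \<gamma> (\<pi> x) \<bullet> i) has_derivative (\<lambda>x. (\<chi> p. inner x (D p)) \<bullet> i)) (at \<theta> within UNIV)"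
      unfolding j inner_axis using comp[of j] by simp
  qed
  then show ?thesis by auto
qed



theorem mainTheorem3:
  fixes xi :: "'s::finite \<Rightarrow> real"
    and P :: "'s \<Rightarrow> 'a::finite \<Rightarrow> 's \<Rightarrow> real"
    and \<gamma> :: real
    and \<pi> :: "real ^ 'd::finite \<Rightarrow> 's \<Rightarrow> 'a \<Rightarrow> real"
    and \<Theta> :: "(real ^ 'd) set"
    and \<theta> :: "real ^ 'd"
    and F :: "real ^ ('s \<times> 'a) \<Rightarrow> real"
    and lF LF lFs C :: real
    and xs :: "real \<Rightarrow> real ^ 'd"
  assumes xi_dist: "\<forall>s. xi s \<ge> 0" "(\<Sum>s\<in>UNIV. xi s) = 1"
    and P_dist: "\<forall>s a s'. P s a s' \<ge> 0" "\<forall>s a. (\<Sum>s'\<in>UNIV. P s a s') = 1"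
    and gamma: "0 < \<gamma>" "\<gamma> < 1"
    and Theta: "open \<Theta>" "\<theta> \<in> \<Theta>"
    and pi_dist: "\<forall>th\<in>\<Theta>. \<forall>s a. \<pi> th s a \<ge> 0"
                 "\<forall>th\<in>\<Theta>. \<forall>s. (\<Sum>a\<in>UNIV. \<pi> th s a) = 1"
    \<comment> \<open>(i)\<close>
    and F_concave: "concave_on UNIV F"
    and F_diff: "\<forall>l. F differentiable (at l)"
    and F_grad_bound: "\<forall>l. norm1 l \<le> 2 / (1 - \<gamma>) \<longrightarrow> infnorm (grad F l) \<le> lF"
    \<comment> \<open>(ii)\<close>
    and F_smooth: "\<forall>l l'. infnorm (grad F l - grad F l') \<le> LF * norm1 (l - l')"
    \<comment> \<open>(iii)\<close>
    and Fstar_lip: "\<forall>z\<in>{z. infnorm z \<le> 2 * lF \<and> fenchel_dual F z > -\<infinity>}.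
                    \<forall>z'\<in>{z. infnorm z \<le> 2 * lF \<and> fenchel_dual F z > -\<infinity>}.
                      \<bar>real_of_ereal (fenchel_dual F z) - real_of_ereal (fenchel_dual F z')\<bar>
                        \<le> lFs * infnorm (z - z')"
    \<comment> \<open>(iv)\<close>
    and pi_diff: "\<forall>th\<in>\<Theta>. \<forall>s a. (\<lambda>\<eta>. \<pi> \<eta> s a) differentiable (at th)"
    and pi_grad_bound: "\<forall>th\<in>\<Theta>. \<forall>s. \<forall>u :: 'a \<Rightarrow> real. (\<forall>a. \<bar>u a\<bar> \<le> 1) \<longrightarrow>
                          norm (\<Sum>a\<in>UNIV. u a *\<^sub>R grad (\<lambda>\<eta>. \<pi> \<eta> s a) th) \<le> C"
    \<comment> \<open>x*(\<delta>) maximizes x \<mapsto> min over the infinity-ball of radius lF of the objective\<close>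
    and xs_argmax: "\<forall>\<delta>. 0 < \<delta> \<and> \<delta> < 1 \<longrightarrow> (\<forall>x.
          (INF z\<in>{z. infnorm z \<le> lF}.
             ereal (inner z (occ xi P \<gamma> (\<pi> \<theta>))
                    + \<delta> * inner (grad (\<lambda>\<eta>. inner z (occ xi P \<gamma> (\<pi> \<eta>))) \<theta>) x
                    - \<delta> / 2 * (norm x)\<^sup>2) - fenchel_dual F z)
          \<le> (INF z\<in>{z. infnorm z \<le> lF}.
             ereal (inner z (occ xi P \<gamma> (\<pi> \<theta>))
                    + \<delta> * inner (grad (\<lambda>\<eta>. inner z (occ xi P \<gamma> (\<pi> \<eta>))) \<theta>) (xs \<delta>)
                    - \<delta> / 2 * (norm (xs \<delta>))\<^sup>2) - fenchel_dual F z))"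
  shows "(\<lambda>\<delta>. (norm (xs \<delta> - grad (\<lambda>\<eta>. F (occ xi P \<gamma> (\<pi> \<eta>))) \<theta>))\<^sup>2)
           \<in> O[at_right 0](\<lambda>\<delta>. \<delta>\<^sup>2)"
proof -
  obtain D where LD: "((\<lambda>\<eta>. occ xi P \<gamma> (\<pi> \<eta>)) has_derivative (\<lambda>h. \<chi> p. inner h (D p))) (at \<theta>)"
    using occ_deriv[OF xi_dist P_dist gamma Theta pi_dist pi_diff pi_grad_bound] by blast
  define L0 where "L0 = occ xi P \<gamma> (\<pi> \<theta>)"
  define Jt where "Jt z = (\<Sum>p\<in>UNIV. (z $ p) *\<^sub>R D p)" for z :: "real ^ ('s \<times> 'a)"
  define Jx where "Jx x = (\<chi> p. inner x (D p))" for x :: "real ^ 'd"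
  have JtJx: "inner (Jt z) x = inner z (Jx x)" for z x
  proof -
    have "inner (Jt z) x = (\<Sum>p\<in>UNIV. z $ p * inner (D p) x)" unfolding Jt_def by (simp add: inner_sum_left)
    also have "\<dots> = inner z (Jx x)" unfolding Jx_def by (simp add: inner_vec_def mult.commute)
    finally show ?thesis .
  qed
  have gradz: "grad (\<lambda>\<eta>. inner z (occ xi P \<gamma> (\<pi> \<eta>))) \<theta> = Jt z" for z
  proof (rule grad_eqI)
    have "((\<lambda>\<eta>. inner z (occ xi P \<gamma> (\<pi> \<eta>))) has_derivative (\<lambda>h. inner z (Jx h))) (at \<theta>)"
      using has_derivative_inner_right[OF LD, of z] unfolding Jx_def by simp
    then show "GDERIV (\<lambda>\<eta>. inner z (occ xi P \<gamma> (\<pi> \<eta>))) \<theta> :> Jt z"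
      unfolding gderiv_def by (rule has_derivative_eq_rhs) (rule ext, metis JtJx inner_commute)
  qed
  have Fg: "GDERIV F l :> grad F l" for l using F_diff differentiable_gderiv by blast
  define z0 where "z0 = grad F L0"
  define g0 where "g0 = Jt z0"
  have gradR: "grad (\<lambda>\<eta>. F (occ xi P \<gamma> (\<pi> \<eta>))) \<theta> = g0"
  proof (rule grad_eqI)
    have "((\<lambda>\<eta>. F (occ xi P \<gamma> (\<pi> \<eta>))) has_derivative (\<lambda>h. inner (Jx h) z0)) (at \<theta>)"
      using has_derivative_compose[OF LD Fg[of "occ xi P \<gamma> (\<pi> \<theta>)", unfolded gderiv_def]] unfolding Jx_def z0_def L0_def by simp
    then show "GDERIV (\<lambda>\<eta>. F (occ xi P \<gamma> (\<pi> \<eta>))) \<theta> :> g0"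
      unfolding gderiv_def g0_def by (rule has_derivative_eq_rhs) (rule ext, metis JtJx inner_commute)
  qed
  define N where "N = norm1 (Jx g0)"
  define B where "B = (\<Sum>p\<in>UNIV. norm (D p))"
  have N0: "N \<ge> 0" unfolding N_def by (rule norm1_nonneg)
  have B0: "B \<ge> 0" unfolding B_def by (simp add: sum_nonneg)
  have nL0: "norm1 L0 = 1 / (1 - \<gamma>)"
    unfolding L0_def by (rule occ_norm1) (use xi_dist P_dist pi_dist Theta gamma in auto)
  have Jtb: "norm (Jt w) \<le> infnorm w * B" for w
  proof -
    have "norm (Jt w) \<le> (\<Sum>p\<in>UNIV. norm ((w $ p) *\<^sub>R D p))" unfolding Jt_def by (rule norm_sum)
    also have "\<dots> \<le> (\<Sum>p\<in>UNIV. infnorm w * norm (D p))"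
      by (intro sum_mono) (simp add: mult_right_mono component_le_infnorm_cart)
    finally show ?thesis unfolding B_def by (simp add: sum_distrib_left)
  qed
  have Jtd: "Jt a - Jt b = Jt (a - b)" for a b
    unfolding Jt_def by (simp add: sum_subtractf scaleR_diff_left)
  define d0 where "d0 = min 1 (1 / ((1 - \<gamma>) * (N + 1)))"
  have d0: "d0 > 0" unfolding d0_def using gamma N0 by simp
  define c where "c = 2 * B * LF * N"
  have main: "(norm (xs \<delta> - g0))\<^sup>2 \<le> c\<^sup>2 * \<delta>\<^sup>2" if dl: "0 < \<delta>" "\<delta> < d0" for \<delta>
  proof -
    have d1: "\<delta> < 1" using dl d0_def by simp
    have dN: "\<delta> * N \<le> 1 / (1 - \<gamma>)"
    proof -
      have "\<delta> * N \<le> \<delta> * (N + 1)" using dl by simp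
      also have "\<dots> \<le> 1 / ((1 - \<gamma>) * (N + 1)) * (N + 1)"
        using dl d0_def N0 by (intro mult_right_mono) auto
      also have "\<dots> = 1 / (1 - \<gamma>)"
      proof -
        have h: "0 < (1 - \<gamma>) * (N + 1)" using N0 gamma by simp
        then have "\<gamma> + N * \<gamma> < 1 + N" by (simp add: algebra_simps)
        then show ?thesis using gamma by (simp add: field_simps)
      qed
      finally show ?thesis .
    qed
    define \<nu> where "\<nu> = L0 + \<delta> *\<^sub>R Jx g0"
    define zn where "zn = grad F \<nu>"
    define x where "x = xs \<delta>"
    have n\<nu>: "norm1 \<nu> \<le> 2 / (1 - \<gamma>)"
    proof -
      have "norm1 \<nu> \<le> norm1 L0 + \<delta> * N" unfolding \<nu>_def N_def
        using norm1_add[of L0 "\<delta> *\<^sub>R Jx g0"] norm1_scale[of \<delta> "Jx g0"] dl by simp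
      then show ?thesis using nL0 dN by simp
    qed
    have zb: "infnorm zn \<le> lF" unfolding zn_def using F_grad_bound n\<nu> by blast
    have fdn: "fenchel_dual F zn = ereal (inner \<nu> zn - F \<nu>)"
      unfolding zn_def by (rule fd_eq[OF F_concave Fg])
    have lin: "inner z L0 + \<delta> * inner (Jt z) g0 = inner \<nu> z" for z
    proof -
      have "inner \<nu> z = inner L0 z + \<delta> * inner (Jx g0) z" unfolding \<nu>_def by (simp add: inner_add_left)
      also have "inner (Jx g0) z = inner (Jt z) g0" using JtJx[of z g0] inner_commute by metis
      also have "inner L0 z = inner z L0" by (rule inner_commute)
      finally show ?thesis by simp
    qed
    let ?Obj = "\<lambda>x z. ereal (inner z L0 + \<delta> * inner (Jt z) x - \<delta> / 2 * (norm x)\<^sup>2) - fenchel_dual F z"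
    have ineq: "(INF z\<in>{z. infnorm z \<le> lF}. ?Obj g0 z) \<le> (INF z\<in>{z. infnorm z \<le> lF}. ?Obj x z)"
      using xs_argmax[rule_format, of \<delta> g0] dl d1 unfolding x_def L0_def by (simp only: gradz)
    have low: "ereal (F \<nu> - \<delta> / 2 * (norm g0)\<^sup>2) \<le> (INF z\<in>{z. infnorm z \<le> lF}. ?Obj g0 z)"
    proof (rule INF_greatest)
      fix z
      have "ereal (inner z L0 + \<delta> * inner (Jt z) g0 - \<delta> / 2 * (norm g0)\<^sup>2) - ereal (inner \<nu> z - F \<nu>)
          \<le> ?Obj g0 z"
        by (rule ereal_minus_mono[OF order_refl fd_le])
      then show "ereal (F \<nu> - \<delta> / 2 * (norm g0)\<^sup>2) \<le> ?Obj g0 z"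
        by (simp add: lin)
    qed
    have up: "(INF z\<in>{z. infnorm z \<le> lF}. ?Obj x z)
        \<le> ereal (inner zn L0 + \<delta> * inner (Jt zn) x - \<delta> / 2 * (norm x)\<^sup>2 - (inner \<nu> zn - F \<nu>))"
    proof -
      have "(INF z\<in>{z. infnorm z \<le> lF}. ?Obj x z) \<le> ?Obj x zn" by (rule INF_lower) (use zb in simp)
      then show ?thesis by (simp add: fdn)
    qed
    have r: "F \<nu> - \<delta> / 2 * (norm g0)\<^sup>2 \<le> inner zn L0 + \<delta> * inner (Jt zn) x - \<delta> / 2 * (norm x)\<^sup>2 - (inner \<nu> zn - F \<nu>)"
      using order_trans[OF low order_trans[OF ineq up]] by simp
    have "inner \<nu> zn = inner zn L0 + \<delta> * inner (Jt zn) g0" using lin[of zn] by simp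
    with r have "\<delta> * ((norm x)\<^sup>2 - (norm g0)\<^sup>2) \<le> \<delta> * (2 * inner (Jt zn) (x - g0))"
      by (simp add: inner_diff_right algebra_simps)
    then have r2: "(norm x)\<^sup>2 - (norm g0)\<^sup>2 \<le> 2 * inner (Jt zn) (x - g0)" using dl by simp
    define e where "e = x - g0"
    have "(norm x)\<^sup>2 = (norm e)\<^sup>2 + 2 * inner g0 e + (norm g0)\<^sup>2"
      unfolding e_def power2_norm_eq_inner by (simp add: inner_diff_left inner_diff_right inner_commute)
    with r2 have "(norm e)\<^sup>2 \<le> 2 * inner (Jt zn - g0) e" unfolding e_def by (simp add: inner_diff_left)
    also have "\<dots> \<le> 2 * (norm (Jt zn - g0) * norm e)"
      using Cauchy_Schwarz_ineq2[of "Jt zn - g0" e] by simp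
    finally have r3: "(norm e)\<^sup>2 \<le> 2 * (norm (Jt zn - g0) * norm e)" .
    have r4: "norm e \<le> 2 * norm (Jt zn - g0)"
    proof (cases "norm e = 0")
      case True then show ?thesis by simp
    next
      case False
      then have "norm e > 0" by simp
      with r3 show ?thesis by (simp add: power2_eq_square)
    qed
    have "norm (Jt zn - g0) \<le> infnorm (zn - z0) * B" unfolding g0_def Jtd by (rule Jtb)
    also have "\<dots> \<le> (LF * norm1 (\<nu> - L0)) * B"
      using F_smooth B0 unfolding zn_def z0_def by (intro mult_right_mono) auto
    also have "norm1 (\<nu> - L0) = \<delta> * N" unfolding \<nu>_def N_def using norm1_scale[of \<delta> "Jx g0"] dl by simp
    finally have "norm e \<le> c * \<delta>" using r4 unfolding c_def by (simp add: algebra_simps)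
    then have "(norm e)\<^sup>2 \<le> (c * \<delta>)\<^sup>2" by (intro power_mono) auto
    then show ?thesis unfolding e_def x_def by (simp add: power_mult_distrib)
  qed
  show ?thesis
  proof (rule bigoI[where c="c\<^sup>2"])
    show "\<forall>\<^sub>F \<delta> in at_right 0. norm ((norm (xs \<delta> - grad (\<lambda>\<eta>. F (occ xi P \<gamma> (\<pi> \<eta>))) \<theta>))\<^sup>2) \<le> c\<^sup>2 * norm (\<delta>\<^sup>2)"
      by (rule eventually_at_rightI[OF _ d0]) (use main in \<open>auto simp: gradR\<close>)
  qed
qed

end
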